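(* For every $K>0$ there exist a uniformly continuous function $\hat g_K:\mathbb{R}\to\mathbb{R}$ and a number $x_K\ge K$ such that: (i) $\hat g_K$ is affine on $[x_K,\infty)$ and on $(-\infty,-x_K]$; (ii) $\hat g_K=\hat g$ on $[-K,K]$; (iii) $\hat g_K\ge\hat g$; (iv) $\hat g_K-\bar\Gamma$ is concave for every $C^2$ function $\bar\Gamma$ satisfying $\partial^2_{xx}\bar\Gamma=\bar\gamma$. Moreover, the family $(\hat g_K)_{K>0}$ is uniformly bounded (in absolute value) by a function with linear growth and converges to $\hat g$ uniformly on compact sets as $K\to\infty$.
   Context: Standing assumptions: $f\in C^2_b(\mathbb{R})$ with $\inf f>0$; $\bar\gamma:\mathbb{R}\to\mathbb{R}$ is bounded and continuous with $\iota\le\bar\gamma\le1/f-\iota$ for some $\iota>0$; $g:\mathbb{R}\to\mathbb{R}$ is lower semicontinuous with $g^-$ bounded and $g^+$ of linear growth; $\hat g:=(g-\bar\Gamma)^{\rm conc}+\bar\Gamma$ where $\bar\Gamma$ is any $C^2$ function with $\partial^2_{xx}\bar\Gamma=\bar\gamma$ and ${}^{\rm conc}$ denotes the concave envelope (independent of the choice of $\bar\Gamma$); $\hat g$ is assumed uniformly continuous. *)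

theory Defs
  imports "HOL-Analysis.Analysis"
begin

definition lsc :: "(real \<Rightarrow> real) \<Rightarrow> bool" where
  "lsc g \<longleftrightarrow> (\<forall>x. \<forall>c. c < g x \<longrightarrow> (\<forall>\<^sub>F y in at x. c < g y))"

definition conc_env :: "(real \<Rightarrow> real) \<Rightarrow> real \<Rightarrow> real" where
  "conc_env h x = Inf {\<phi> x | \<phi>. concave_on UNIV \<phi> \<and> (\<forall>y. h y \<le> \<phi> y)}"

definition C2b :: "(real \<Rightarrow> real) \<Rightarrow> bool" where
  "C2b f \<longleftrightarrow> (\<exists>f1 f2. (\<forall>x. (f has_real_derivative f1 x) (at x)) \<and>
      (\<forall>x. (f1 has_real_derivative f2 x) (at x)) \<and> continuous_on UNIV f2 \<and>
      bounded (range f) \<and> bounded (range f1) \<and> bounded (range f2))"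

definition C2_with_second_deriv :: "(real \<Rightarrow> real) \<Rightarrow> (real \<Rightarrow> real) \<Rightarrow> bool" where
  "C2_with_second_deriv \<Gamma> \<gamma> \<longleftrightarrow> continuous_on UNIV \<gamma> \<and> (\<exists>\<Gamma>1.
      (\<forall>x. (\<Gamma> has_real_derivative \<Gamma>1 x) (at x)) \<and>
      (\<forall>x. (\<Gamma>1 has_real_derivative \<gamma> x) (at x)))"

end

theory Submission
  imports Defs
begin

lemma concave_on_min2:
  fixes f g :: "'a::real_vector \<Rightarrow> real"
  assumes "concave_on S f" "concave_on S g"
  shows "concave_on S (\<lambda>x. min (f x) (g x))"
  unfolding concave_on_iff
proof (intro conjI ballI allI impI)
  show "convex S" using assms(1) concave_on_imp_convex by blast
next
  fix x y and u v :: real assume xy: "x \<in> S" "y \<in> S" and uv: "0 \<le> u" "0 \<le> v" "u + v = 1"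
  have "f (u *\<^sub>R x + v *\<^sub>R y) \<ge> u * f x + v * f y" using assms(1) xy uv by (auto simp: concave_on_iff)
  moreover have "g (u *\<^sub>R x + v *\<^sub>R y) \<ge> u * g x + v * g y" using assms(2) xy uv by (auto simp: concave_on_iff)
  moreover have "u * min (f x) (g x) \<le> u * f x" "u * min (f x) (g x) \<le> u * g x"
    using uv by (auto intro: mult_left_mono)
  moreover have "v * min (f y) (g y) \<le> v * f y" "v * min (f y) (g y) \<le> v * g y"
    using uv by (auto intro: mult_left_mono)
  ultimately show "u * min (f x) (g x) + v * min (f y) (g y) \<le> min (f (u *\<^sub>R x + v *\<^sub>R y)) (g (u *\<^sub>R x + v *\<^sub>R y))"
    by linarith
qed

lemma concave_reflect:
  fixes f :: "real \<Rightarrow> real"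
  assumes "concave_on UNIV f"
  shows "concave_on UNIV (\<lambda>x. f (- x))"
  unfolding concave_on_iff
proof (intro conjI ballI allI impI)
  fix x y u v :: real assume uv: "0 \<le> u" "0 \<le> v" "u + v = 1"
  have "f (u *\<^sub>R (-x) + v *\<^sub>R (-y)) \<ge> u * f (-x) + v * f (-y)" using assms uv
    unfolding concave_on_iff by blast
  moreover have "u *\<^sub>R (-x) + v *\<^sub>R (-y) = - (u *\<^sub>R x + v *\<^sub>R y)" by simp
  ultimately show "u * f (- x) + v * f (- y) \<le> f (- (u *\<^sub>R x + v *\<^sub>R y))" by metis
qed simp

lemma concave_supergrad:
  fixes f :: "real \<Rightarrow> real"
  assumes "concave_on UNIV f"
  shows "\<exists>s. \<forall>x. f x \<le> f K + s * (x - K)"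
proof -
  have slope: "(f y - f K) / (y - K) \<le> (f K - f x) / (K - x)" if "x < K" "K < y" for x y
  proof -
    have cv: "convex_on UNIV (\<lambda>x. - f x)" using assms by (simp add: concave_on_def)
    have "((- f x) - (- f K)) / (x - K) \<le> ((-f x) - (- f y)) / (x - y)"
      "((-f x) - (- f y)) / (x - y) \<le> ((- f K) - (- f y)) / (K - y)"
      using convex_on_slope_le[OF cv _ _ that] by auto
    then have "((- f x) - (- f K)) / (x - K) \<le> ((- f K) - (- f y)) / (K - y)" by linarith
    moreover have "((- f x) - (- f K)) / (x - K) = - ((f K - f x) / (K - x))"
      using that by (simp add: field_simps)
    moreover have "((- f K) - (- f y)) / (K - y) = - ((f y - f K) / (y - K))"
      using that by (simp add: field_simps)
    ultimately show ?thesis by linarith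
  qed
  define S where "S = {(f K - f x) / (K - x) | x. x < K}"
  define s where "s = Inf S"
  have ne: "S \<noteq> {}" unfolding S_def by (auto intro: exI[of _ "K - 1"])
  have bdd: "bdd_below S" unfolding S_def bdd_below_def
    using slope[of _ "K+1"] by (intro exI[of _ "(f (K+1) - f K) / (K + 1 - K)"]) auto
  show ?thesis
  proof (intro exI allI)
    fix x
    consider "x < K" | "x = K" | "x > K" by linarith
    then show "f x \<le> f K + s * (x - K)"
    proof cases
      case 1
      have "s \<le> (f K - f x) / (K - x)" unfolding s_def using bdd 1
        by (intro cInf_lower) (auto simp: S_def)
      then have "s * (K - x) \<le> f K - f x" using 1 by (simp add: le_divide_eq)
      then show ?thesis by (simp add: algebra_simps)
    next
      case 2 then show ?thesis by simp
    next
      case 3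
      have "(f x - f K) / (x - K) \<le> s" unfolding s_def using ne
        by (intro cInf_greatest) (auto simp: S_def intro: slope[OF _ 3])
      then have "f x - f K \<le> s * (x - K)" using 3 by (simp add: divide_le_eq)
      then show ?thesis by simp
    qed
  qed
qed

lemma glue_right:
  fixes f :: "real \<Rightarrow> real"
  assumes cf: "concave_on UNIV f" and sg: "\<And>x. f x \<le> f K + s * (x - K)"
  shows "concave_on UNIV (\<lambda>x. if x \<le> K then f x else f K + s * (x - K))"
proof (rule concave_on_linorderI)
  fix t x y :: real assume t: "0 < t" "t < 1" and xy: "x < y"
  define E where "E = (\<lambda>x. if x \<le> K then f x else f K + s * (x - K))"
  define z where "z = (1 - t) * x + t * y"
  have "t * (y - x) > 0" "(1 - t) * (y - x) > 0" using t xy by auto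
  then have zx: "x < z" "z < y" unfolding z_def by (auto simp: algebra_simps)
  have goal: "E z \<ge> (1 - t) * E x + t * E y"
  proof -
    consider "y \<le> K" | "K < x" | "x \<le> K" "K < y" by linarith
    then show ?thesis
    proof cases
      case 1
      have "f ((1 - t) *\<^sub>R x + t *\<^sub>R y) \<ge> (1 - t) * f x + t * f y"
        using concave_onD[OF cf, of t x y] t by auto
      then show ?thesis using 1 zx unfolding E_def z_def by auto
    next
      case 2 then show ?thesis using zx unfolding E_def z_def by (simp add: algebra_simps)
    next
      case 3
      have fx: "f x \<le> f K + s * (x - K)" by (rule sg)
      show ?thesis
      proof (cases "z \<le> K")
        case False
        have "(1 - t) * f x \<le> (1 - t) * (f K + s * (x - K))" using fx t by (intro mult_left_mono) auto
        then show ?thesis using False 3 zx unfolding E_def z_def by (auto simp: algebra_simps)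
      next
        case True
        have xK: "x < K" using zx True by linarith
        define u where "u = (z - x) / (K - x)"
        have u01: "0 \<le> u" "u \<le> 1" using zx True xK unfolding u_def by (auto simp: field_simps)
        have zu: "z = (1 - u) * x + u * K"
        proof -
          have "u * (K - x) = z - x" unfolding u_def using xK by simp
          moreover have "(1 - u) * x + u * K = x + u * (K - x)" by (simp add: algebra_simps)
          ultimately show ?thesis by linarith
        qed
        have fz: "f z \<ge> (1 - u) * f x + u * f K"
          using concave_onD[OF cf, of u x K] u01 zu by auto
        have tu: "t \<le> u"
        proof -
          have "t = (z - x) / (y - x)" using xy unfolding z_def by (simp add: field_simps)
          also have "\<dots> \<le> (z - x) / (K - x)" using zx xK 3 by (intro divide_left_mono) auto
          finally show ?thesis unfolding u_def .
        qed
        define D where "D = f K + s * (x - K) - f x"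
        have D0: "D \<ge> 0" using fx unfolding D_def by simp
        have zx': "z - x = u * (K - x)" using zu by (simp add: algebra_simps)
        have e1': "(1 - u) * f x + u * f K = f x + u * D + s * (u * (K - x))"
          unfolding D_def by (simp add: algebra_simps)
        have e1: "(1 - u) * f x + u * f K = f x + u * D + s * (z - x)"
          using e1' zx' by simp
        have e2: "(1 - t) * f x + t * (f K + s * (y - K)) = f x + t * D + s * (z - x)"
          unfolding D_def z_def by (simp add: algebra_simps)
        have "t * D \<le> u * D" using tu D0 by (intro mult_right_mono) auto
        then show ?thesis using fz e1 e2 True 3 unfolding E_def by auto
      qed
    qed
  qed
  then show "(1 - t) * (if x \<le> K then f x else f K + s * (x - K)) + t * (if y \<le> K then f y else f K + s * (y - K))
       \<le> (if (1 - t) *\<^sub>R x + t *\<^sub>R y \<le> K then f ((1 - t) *\<^sub>R x + t *\<^sub>R y) else f K + s * ((1 - t) *\<^sub>R x + t *\<^sub>R y - K))"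
    unfolding E_def z_def real_scaleR_def .
qed simp

lemma glue_left:
  fixes f :: "real \<Rightarrow> real"
  assumes cf: "concave_on UNIV f" and sg: "\<And>x. f x \<le> f K + s * (x - K)"
  shows "concave_on UNIV (\<lambda>x. if K \<le> x then f x else f K + s * (x - K))"
proof -
  let ?g = "\<lambda>x. f (- x)"
  have cg: "concave_on UNIV ?g" by (rule concave_reflect[OF cf])
  have sgg: "?g x \<le> ?g (-K) + (-s) * (x - (-K))" for x using sg[of "-x"] by (simp add: algebra_simps)
  have "concave_on UNIV (\<lambda>x. if x \<le> -K then ?g x else ?g (-K) + (-s) * (x - (-K)))"
    by (rule glue_right[OF cg sgg])
  from concave_reflect[OF this] have "concave_on UNIV (\<lambda>x. if K \<le> x then f (- (- x)) else f (- (- K)) + - s * (- x - - K))"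
    by simp
  moreover have "(\<lambda>x. if K \<le> x then f (- (- x)) else f (- (- K)) + - s * (- x - - K)) = (\<lambda>x. if K \<le> x then f x else f K + s * (x - K))"
    by (auto simp: fun_eq_iff algebra_simps)
  ultimately show ?thesis by simp
qed


lemma conc_env_concave: "concave_on UNIV (conc_env h)"
proof (cases "\<exists>\<phi>. concave_on UNIV \<phi> \<and> (\<forall>y. h y \<le> \<phi> y)")
  case True
  then obtain \<phi>0 where \<phi>0: "concave_on UNIV \<phi>0" "\<forall>y. h y \<le> \<phi>0 y" by blast
  define M where "M x = {\<phi> x | \<phi>. concave_on UNIV \<phi> \<and> (\<forall>y. h y \<le> \<phi> y)}" for x
  have ce: "conc_env h x = Inf (M x)" for x unfolding conc_env_def M_def by simp
  have ne: "M x \<noteq> {}" for x unfolding M_def using \<phi>0 by blast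
  have bdd: "bdd_below (M x)" for x unfolding M_def bdd_below_def by (intro exI[of _ "h x"]) auto
  show ?thesis unfolding concave_on_iff
  proof (intro conjI ballI allI impI)
    fix x y :: real and u v :: real assume uv: "0 \<le> u" "0 \<le> v" "u + v = 1"
    show "u * conc_env h x + v * conc_env h y \<le> conc_env h (u *\<^sub>R x + v *\<^sub>R y)"
      unfolding ce
    proof (rule cInf_greatest[OF ne])
      fix w assume "w \<in> M (u *\<^sub>R x + v *\<^sub>R y)"
      then obtain \<phi> where \<phi>: "w = \<phi> (u *\<^sub>R x + v *\<^sub>R y)" "concave_on UNIV \<phi>" "\<forall>y. h y \<le> \<phi> y"
        unfolding M_def by blast
      have "\<phi> (u *\<^sub>R x + v *\<^sub>R y) \<ge> u * \<phi> x + v * \<phi> y" using \<phi>(2) uv unfolding concave_on_iff by blast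
      moreover have "Inf (M x) \<le> \<phi> x" using \<phi> by (intro cInf_lower[OF _ bdd]) (auto simp: M_def)
      moreover have "Inf (M y) \<le> \<phi> y" using \<phi> by (intro cInf_lower[OF _ bdd]) (auto simp: M_def)
      ultimately have "u * Inf (M x) + v * Inf (M y) \<le> \<phi> (u *\<^sub>R x + v *\<^sub>R y)"
        using uv by (smt (verit) mult_left_mono)
      then show "u * Inf (M x) + v * Inf (M y) \<le> w" using \<phi>(1) by simp
    qed
  qed simp
next
  case False
  then have E: "{\<phi> x |\<phi>. concave_on UNIV \<phi> \<and> (\<forall>y. h y \<le> \<phi> y)} = {}" for x by blast
  have "conc_env h = (\<lambda>x. Inf {})" unfolding conc_env_def by (rule ext, subst E, rule refl)
  then show ?thesis by (simp add: concave_on_const)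
qed

lemma uc_linear_growth:
  fixes f :: "real \<Rightarrow> real"
  assumes "uniformly_continuous_on UNIV f"
  shows "\<exists>A B. A \<ge> 0 \<and> B \<ge> 0 \<and> (\<forall>x. \<bar>f x\<bar> \<le> A + B * \<bar>x\<bar>)"
proof -
  obtain d where d: "d > 0" "\<And>x x'. dist x' x < d \<Longrightarrow> dist (f x') (f x) < 1"
    using assms unfolding uniformly_continuous_on_def by (metis UNIV_I zero_less_one)
  define d2 where "d2 = d / 2"
  have d2: "d2 > 0" "d2 < d" using d unfolding d2_def by auto
  have ind: "\<forall>x. \<bar>x\<bar> \<le> real n * d2 \<longrightarrow> \<bar>f x - f 0\<bar> \<le> real n" for n
  proof (induction n)
    case 0 then show ?case by simp
  next
    case (Suc n)
    show ?case
    proof (intro allI impI)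
      fix x :: real assume x: "\<bar>x\<bar> \<le> real (Suc n) * d2"
      define y where "y = x * real n / real (Suc n)"
      have "\<bar>y\<bar> = \<bar>x\<bar> * real n / real (Suc n)" unfolding y_def by (simp add: abs_mult)
      also have "\<dots> \<le> real (Suc n) * d2 * real n / real (Suc n)"
        using x by (intro divide_right_mono mult_right_mono) auto
      also have "\<dots> = real n * d2" by simp
      finally have y1: "\<bar>f y - f 0\<bar> \<le> real n" using Suc by blast
      have "x - y = x / real (Suc n)" unfolding y_def by (simp add: field_simps)
      then have "\<bar>x - y\<bar> = \<bar>x\<bar> / real (Suc n)" by simp
      also have "\<dots> \<le> real (Suc n) * d2 / real (Suc n)" using x by (intro divide_right_mono) auto
      also have "\<dots> = d2" by simp
      finally have "dist x y < d" using d2 by (simp add: dist_real_def)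
      then have "\<bar>f x - f y\<bar> < 1" using d(2) by (simp add: dist_real_def)
      then show "\<bar>f x - f 0\<bar> \<le> real (Suc n)" using y1 by simp
    qed
  qed
  show ?thesis
  proof (intro exI conjI allI)
    fix x :: real
    define n where "n = nat \<lceil>\<bar>x\<bar> / d2\<rceil>"
    have "\<bar>x\<bar> / d2 \<le> real n" unfolding n_def by linarith
    then have "\<bar>x\<bar> \<le> real n * d2" using d2 by (simp add: divide_le_eq)
    then have "\<bar>f x - f 0\<bar> \<le> real n" using ind by blast
    moreover have "real n \<le> \<bar>x\<bar> / d2 + 1"
    proof -
      have r0: "\<bar>x\<bar> / d2 \<ge> 0" using d2 by simp
      then have "real n = of_int \<lceil>\<bar>x\<bar> / d2\<rceil>" unfolding n_def by simp
      then show ?thesis using of_int_ceiling_le_add_one[of "\<bar>x\<bar> / d2"] by linarith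
    qed
    ultimately show "\<bar>f x\<bar> \<le> (\<bar>f 0\<bar> + 1) + (1 / d2) * \<bar>x\<bar>" by simp
  qed (use d2 in auto)
qed

lemma quad_dom:
  fixes \<iota> a b :: real
  assumes "\<iota> > 0"
  shows "\<exists>N. \<forall>x\<ge>N. a + b * x \<le> \<iota> * x\<^sup>2 / 2"
proof (intro exI allI impI)
  fix x assume x: "x \<ge> max 1 (2 * (\<bar>a\<bar> + \<bar>b\<bar>) / \<iota>)"
  then have x1: "x \<ge> 1" and x2: "\<iota> * x / 2 \<ge> \<bar>a\<bar> + \<bar>b\<bar>" using assms by (auto simp: field_simps)
  have "\<bar>a\<bar> * 1 \<le> \<bar>a\<bar> * x" using x1 by (intro mult_left_mono) auto
  moreover have "b * x \<le> \<bar>b\<bar> * x" using x1 by (intro mult_right_mono) auto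
  ultimately have "a + b * x \<le> \<bar>a\<bar> * x + \<bar>b\<bar> * x" by linarith
  also have "\<dots> = (\<bar>a\<bar> + \<bar>b\<bar>) * x" by (simp add: algebra_simps)
  also have "\<dots> \<le> (\<iota> * x / 2) * x" using x1 x2 by (intro mult_right_mono) auto
  also have "\<dots> = \<iota> * x\<^sup>2 / 2" by (simp add: power2_eq_square)
  finally show "a + b * x \<le> \<iota> * x\<^sup>2 / 2" .
qed

lemma uc_affine_tails:
  fixes g :: "real \<Rightarrow> real" and p ar br al bl :: real
  assumes cont: "continuous_on UNIV g" and p: "p \<ge> 0"
    and r: "\<And>x. x \<ge> p \<Longrightarrow> g x = ar * x + br"
    and l: "\<And>x. x \<le> - p \<Longrightarrow> g x = al * x + bl"
  shows "uniformly_continuous_on UNIV g"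
  unfolding uniformly_continuous_on_def
proof (intro allI impI)
  fix e :: real assume e: "e > 0"
  have "uniformly_continuous_on {-p-1..p+1} g"
    by (rule compact_uniformly_continuous[OF continuous_on_subset[OF cont]]) auto
  then obtain d1 where d1: "d1 > 0" "\<And>x x'. x \<in> {-p-1..p+1} \<Longrightarrow> x' \<in> {-p-1..p+1} \<Longrightarrow> dist x' x < d1 \<Longrightarrow> dist (g x') (g x) < e"
    unfolding uniformly_continuous_on_def using e by metis
  define d where "d = min 1 (min d1 (e / (\<bar>ar\<bar> + \<bar>al\<bar> + 1)))"
  have d: "d > 0" "d \<le> 1" "d \<le> d1" "d \<le> e / (\<bar>ar\<bar> + \<bar>al\<bar> + 1)" unfolding d_def using d1 e by auto
  have lin: "\<bar>a\<bar> * \<bar>x' - x\<bar> < e" if "\<bar>x' - x\<bar> < d" "\<bar>a\<bar> \<le> \<bar>ar\<bar> + \<bar>al\<bar>" for a x x' :: real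
  proof -
    have "\<bar>a\<bar> * \<bar>x' - x\<bar> \<le> (\<bar>ar\<bar> + \<bar>al\<bar>) * \<bar>x' - x\<bar>" using that by (intro mult_right_mono) auto
    also have "\<dots> \<le> (\<bar>ar\<bar> + \<bar>al\<bar> + 1) * \<bar>x' - x\<bar>" by (intro mult_right_mono) auto
    also have "\<dots> < (\<bar>ar\<bar> + \<bar>al\<bar> + 1) * d" using that by (intro mult_strict_left_mono) auto
    also have "\<dots> \<le> e" using d(4) by (simp add: field_simps)
    finally show ?thesis .
  qed
  show "\<exists>d>0. \<forall>x\<in>UNIV. \<forall>x'\<in>UNIV. dist x' x < d \<longrightarrow> dist (g x') (g x) < e"
  proof (intro exI[of _ d] conjI ballI impI)
    fix x x' :: real assume dxx: "dist x' x < d"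
    then have dx: "\<bar>x' - x\<bar> < d" by (simp add: dist_real_def)
    have dx1: "x' - x < 1" "x - x' < 1" using dx d(2) by (auto simp: abs_less_iff)
    have "(x \<in> {-p-1..p+1} \<and> x' \<in> {-p-1..p+1}) \<or> (x \<ge> p \<and> x' \<ge> p) \<or> (x \<le> -p \<and> x' \<le> -p)"
      unfolding atLeastAtMost_iff using dx1 by arith
    then consider "x \<in> {-p-1..p+1} \<and> x' \<in> {-p-1..p+1}" | "x \<ge> p \<and> x' \<ge> p" | "x \<le> -p \<and> x' \<le> -p"
      by blast
    then show "dist (g x') (g x) < e"
    proof cases
      case 1 then show ?thesis using d1(2) dxx d(3) by auto
    next
      case 2
      then have "g x' - g x = ar * (x' - x)" using r by (simp add: algebra_simps)
      then show ?thesis using lin[OF dx, of ar] by (simp add: dist_real_def abs_mult)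
    next
      case 3
      then have "g x' - g x = al * (x' - x)" using l by (simp add: algebra_simps)
      then show ?thesis using lin[OF dx, of al] by (simp add: dist_real_def abs_mult)
    qed
  qed (use d in auto)
qed


lemma key_sq:
  fixes \<iota> B x :: real assumes "\<iota> > 0"
  shows "0 \<le> 2 * B\<^sup>2 / \<iota> + 2 * B * x + \<iota> * x\<^sup>2 / 2"
proof -
  have "\<iota> * (2 * B\<^sup>2 / \<iota> + 2 * B * x + \<iota> * x\<^sup>2 / 2) = (2 * B + \<iota> * x)\<^sup>2 / 2"
    using assms by (simp add: field_simps power2_eq_square)
  then have "\<iota> * (2 * B\<^sup>2 / \<iota> + 2 * B * x + \<iota> * x\<^sup>2 / 2) \<ge> 0" by (simp only:) simp
  then show ?thesis using assms by (simp add: zero_le_mult_iff)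
qed

lemma construction:
  fixes h \<Gamma> \<Gamma>1 \<gamma> :: "real \<Rightarrow> real" and \<iota> A B K :: real
  assumes hc: "concave_on UNIV h"
    and \<Gamma>d: "\<And>x. (\<Gamma> has_real_derivative \<Gamma>1 x) (at x)"
    and \<Gamma>1d: "\<And>x. (\<Gamma>1 has_real_derivative \<gamma> x) (at x)"
    and \<gamma>\<iota>: "\<And>x. \<iota> \<le> \<gamma> x" and \<iota>: "\<iota> > 0"
    and gb: "\<And>x. \<bar>h x + \<Gamma> x\<bar> \<le> A + B * \<bar>x\<bar>" and A: "A \<ge> 0" and B: "B \<ge> 0"
    and K: "K > 0"
  shows "\<exists>Gk xk. uniformly_continuous_on UNIV Gk \<and> xk \<ge> K \<and>
     (\<exists>a b. \<forall>x\<ge>xk. Gk x = a * x + b) \<and> (\<exists>a b. \<forall>x\<le>- xk. Gk x = a * x + b) \<and>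
     (\<forall>x\<in>{-K..K}. Gk x = h x + \<Gamma> x) \<and> (\<forall>x. Gk x \<ge> h x + \<Gamma> x) \<and>
     concave_on UNIV (\<lambda>x. Gk x - \<Gamma> x) \<and>
     (\<forall>x. \<bar>Gk x\<bar> \<le> (A + 2 * B\<^sup>2 / \<iota> + B) * (1 + \<bar>x\<bar>))"
proof -
  define c where "c = 2 * B\<^sup>2 / \<iota>"
  have c0: "c \<ge> 0" unfolding c_def using \<iota> by simp
  have csq: "0 \<le> c + 2 * B * x + \<iota> * x\<^sup>2 / 2" for x unfolding c_def by (rule key_sq[OF \<iota>])
  have csq': "0 \<le> c - 2 * B * x + \<iota> * x\<^sup>2 / 2" for x using key_sq[OF \<iota>, of B "-x"] unfolding c_def by simp
  have \<Gamma>q: "\<Gamma> 0 + \<Gamma>1 0 * x + \<iota> * x\<^sup>2 / 2 \<le> \<Gamma> x" for x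
  proof -
    have "(\<Gamma>1 0 - \<iota> * 0) * (x - 0) \<le> (\<Gamma> x - \<iota> * x\<^sup>2 / 2) - (\<Gamma> 0 - \<iota> * 0\<^sup>2 / 2)"
    proof (rule f''_imp_f'[where f = "\<lambda>x. \<Gamma> x - \<iota> * x\<^sup>2 / 2" and f' = "\<lambda>x. \<Gamma>1 x - \<iota> * x"
          and f'' = "\<lambda>x. \<gamma> x - \<iota>" and C = UNIV])
      show "DERIV (\<lambda>x. \<Gamma> x - \<iota> * x\<^sup>2 / 2) x :> \<Gamma>1 x - \<iota> * x" for x
        by (auto intro!: derivative_eq_intros \<Gamma>d)
      show "DERIV (\<lambda>x. \<Gamma>1 x - \<iota> * x) x :> \<gamma> x - \<iota>" for x
        by (auto intro!: derivative_eq_intros \<Gamma>1d)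
      show "\<gamma> x - \<iota> \<ge> 0" for x using \<gamma>\<iota>[of x] by simp
    qed auto
    then show ?thesis by simp
  qed
  have \<Gamma>t: "\<Gamma> 0 + \<Gamma>1 0 * x \<le> \<Gamma> x" for x
  proof -
    have "\<iota> * x\<^sup>2 / 2 \<ge> 0" using \<iota> by simp
    then show ?thesis using \<Gamma>q[of x] by linarith
  qed
  have \<Gamma>cont: "continuous_on UNIV \<Gamma>"
    using \<Gamma>d by (intro continuous_at_imp_continuous_on ballI) (auto intro: DERIV_isCont)
  define F where "F x = A + c + B * x - \<Gamma> x" for x
  define Fm where "Fm x = A + c - B * x - \<Gamma> x" for x
  have Fc: "concave_on UNIV F"
  proof (rule f''_le0_imp_concave[where f' = "\<lambda>x. B - \<Gamma>1 x" and f'' = "\<lambda>x. - \<gamma> x"])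
    show "DERIV F x :> B - \<Gamma>1 x" for x unfolding F_def[abs_def] by (auto intro!: derivative_eq_intros \<Gamma>d)
    show "DERIV (\<lambda>x. B - \<Gamma>1 x) x :> - \<gamma> x" for x by (auto intro!: derivative_eq_intros \<Gamma>1d)
    show "- \<gamma> x \<le> 0" for x using \<gamma>\<iota>[of x] \<iota> by simp
  qed auto
  have Fmc: "concave_on UNIV Fm"
  proof (rule f''_le0_imp_concave[where f' = "\<lambda>x. - B - \<Gamma>1 x" and f'' = "\<lambda>x. - \<gamma> x"])
    show "DERIV Fm x :> - B - \<Gamma>1 x" for x unfolding Fm_def[abs_def] by (auto intro!: derivative_eq_intros \<Gamma>d)
    show "DERIV (\<lambda>x. - B - \<Gamma>1 x) x :> - \<gamma> x" for x by (auto intro!: derivative_eq_intros \<Gamma>1d)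
    show "- \<gamma> x \<le> 0" for x using \<gamma>\<iota>[of x] \<iota> by simp
  qed auto
  have Fsg: "F x \<le> F 0 + (B - \<Gamma>1 0) * (x - 0)" for x using \<Gamma>t[of x] unfolding F_def by (simp add: algebra_simps)
  have Fmsg: "Fm x \<le> Fm 0 + (- B - \<Gamma>1 0) * (x - 0)" for x using \<Gamma>t[of x] unfolding Fm_def by (simp add: algebra_simps)
  define \<psi>p where "\<psi>p = (\<lambda>x. if 0 \<le> x then F x else F 0 + (B - \<Gamma>1 0) * (x - 0))"
  define \<psi>m where "\<psi>m = (\<lambda>x. if x \<le> 0 then Fm x else Fm 0 + (- B - \<Gamma>1 0) * (x - 0))"
  have \<psi>pc: "concave_on UNIV \<psi>p" unfolding \<psi>p_def by (rule glue_left[OF Fc Fsg])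
  have \<psi>mc: "concave_on UNIV \<psi>m" unfolding \<psi>m_def by (rule glue_right[OF Fmc Fmsg])
  have \<psi>p_ge: "h x \<le> \<psi>p x" for x
  proof (cases "0 \<le> x")
    case True
    then show ?thesis using gb[of x] c0 unfolding \<psi>p_def F_def by simp
  next
    case False
    have "h x + \<Gamma> x \<le> A - B * x" using gb[of x] False by simp
    then show ?thesis using False \<Gamma>q[of x] csq[of x] unfolding \<psi>p_def F_def by (simp add: algebra_simps)
  qed
  have \<psi>m_ge: "h x \<le> \<psi>m x" for x
  proof (cases "x \<le> 0")
    case True
    then show ?thesis using gb[of x] c0 unfolding \<psi>m_def Fm_def by simp
  next
    case False
    have "h x + \<Gamma> x \<le> A + B * x" using gb[of x] False by simp
    then show ?thesis using False \<Gamma>q[of x] csq'[of x] unfolding \<psi>m_def Fm_def by (simp add: algebra_simps)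
  qed
  obtain s1 where s1: "\<And>x. h x \<le> h K + s1 * (x - K)" using concave_supergrad[OF hc] by blast
  define E1 where "E1 = (\<lambda>x. if x \<le> K then h x else h K + s1 * (x - K))"
  have E1c: "concave_on UNIV E1" unfolding E1_def by (rule glue_right[OF hc s1])
  obtain s2 where s2: "\<And>x. E1 x \<le> E1 (-K) + s2 * (x - (-K))" using concave_supergrad[OF E1c] by blast
  define E where "E = (\<lambda>x. if -K \<le> x then E1 x else E1 (-K) + s2 * (x - (-K)))"
  have Ec: "concave_on UNIV E" unfolding E_def by (rule glue_left[OF E1c s2])
  have E1_ge: "h x \<le> E1 x" for x using s1[of x] unfolding E1_def by auto
  have E_ge: "E1 x \<le> E x" for x using s2[of x] unfolding E_def by auto
  have E_eq: "E x = h x" if "x \<in> {-K..K}" for x using that unfolding E_def E1_def by auto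
  have E1mK: "E1 (-K) = h (-K)" using K unfolding E1_def by auto
  define H where "H x = min (E x) (min (\<psi>p x) (\<psi>m x))" for x
  have Hc: "concave_on UNIV H" unfolding H_def[abs_def]
    by (intro concave_on_min2 Ec \<psi>pc \<psi>mc)
  have H_ge: "h x \<le> H x" for x unfolding H_def using E1_ge[of x] E_ge[of x] \<psi>p_ge[of x] \<psi>m_ge[of x] by simp
  have H_eq: "H x = h x" if "x \<in> {-K..K}" for x unfolding H_def using E_eq[OF that] \<psi>p_ge[of x] \<psi>m_ge[of x] by simp
  obtain N1 where N1: "\<And>x. x \<ge> N1 \<Longrightarrow> (A + c - \<Gamma> 0 - h K + s1 * K) + (B - \<Gamma>1 0 - s1) * x \<le> \<iota> * x\<^sup>2 / 2"
    using quad_dom[OF \<iota>] by blast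
  obtain N2 where N2: "\<And>x. x \<ge> N2 \<Longrightarrow> 0 + (2 * B) * x \<le> \<iota> * x\<^sup>2 / 2"
    using quad_dom[OF \<iota>] by blast
  obtain N3 where N3: "\<And>x. x \<ge> N3 \<Longrightarrow> (A + c - \<Gamma> 0 - h (-K) - s2 * K) + (B + \<Gamma>1 0 + s2) * x \<le> \<iota> * x\<^sup>2 / 2"
    using quad_dom[OF \<iota>] by blast
  define p where "p = max K (max N1 (max N2 N3))"
  have pK: "p \<ge> K" and pN: "p \<ge> N1" "p \<ge> N2" "p \<ge> N3" unfolding p_def by auto
  have Hr: "H x = A + c + B * x - \<Gamma> x" if x: "x \<ge> p" for x
  proof -
    have x0: "x > 0" "x \<ge> K" using x pK K by auto
    have pe: "\<psi>p x = A + c + B * x - \<Gamma> x" unfolding \<psi>p_def F_def using x0 by simp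
    have "\<psi>p x \<le> E x"
    proof -
      have "E x = h K + s1 * (x - K)" unfolding E_def E1_def using x0 K by auto
      moreover have "(A + c - \<Gamma> 0 - h K + s1 * K) + (B - \<Gamma>1 0 - s1) * x \<le> \<iota> * x\<^sup>2 / 2" using N1 pN x by auto
      ultimately show ?thesis using pe \<Gamma>q[of x] by (simp add: algebra_simps)
    qed
    moreover have "\<psi>p x \<le> \<psi>m x"
    proof -
      have "\<psi>m x = A + c - \<Gamma> 0 + (- B - \<Gamma>1 0) * x" unfolding \<psi>m_def Fm_def using x0 by simp
      moreover have "0 + (2 * B) * x \<le> \<iota> * x\<^sup>2 / 2" using N2 pN x by auto
      ultimately show ?thesis using pe \<Gamma>q[of x] by (simp add: algebra_simps)
    qed
    ultimately show ?thesis unfolding H_def using pe by simp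
  qed
  have Hl: "H x = A + c - B * x - \<Gamma> x" if x: "x \<le> - p" for x
  proof -
    have x0: "x < 0" "x \<le> - K" using x pK K by auto
    have pe: "\<psi>m x = A + c - B * x - \<Gamma> x" unfolding \<psi>m_def Fm_def using x0 by simp
    have "\<psi>m x \<le> E x"
    proof -
      have "E x = h (-K) + s2 * (x + K)"
      proof (cases "x = -K")
        case True then show ?thesis unfolding E_def using E1mK by simp
      next
        case False then show ?thesis unfolding E_def using x0 E1mK by simp
      qed
      moreover have "-x \<ge> N3" using pN x by linarith
      note N3[OF this]
      ultimately show ?thesis using pe \<Gamma>q[of x] by (simp add: algebra_simps)
    qed
    moreover have "\<psi>m x \<le> \<psi>p x"
    proof -
      have "\<psi>p x = A + c - \<Gamma> 0 + (B - \<Gamma>1 0) * x" unfolding \<psi>p_def F_def using x0 by simp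
      moreover have "-x \<ge> N2" using pN x by linarith
      note N2[OF this]
      ultimately show ?thesis using pe \<Gamma>q[of x] by (simp add: algebra_simps)
    qed
    ultimately show ?thesis unfolding H_def using pe by simp
  qed
  define Gk where "Gk x = H x + \<Gamma> x" for x
  show ?thesis
  proof (rule exI[of _ Gk], rule exI[of _ p], intro conjI)
    have Hcont: "continuous_on UNIV H"
    proof -
      have "convex_on UNIV (\<lambda>x. - H x)" using Hc by (simp add: concave_on_def)
      then have "continuous_on UNIV (\<lambda>x. - H x)" by (intro convex_on_continuous) auto
      then have "continuous_on UNIV (\<lambda>x. - (- H x))" by (rule continuous_on_minus)
      moreover have "(\<lambda>x. - (- H x)) = H" by simp
      ultimately show ?thesis by metis
    qed
    show "uniformly_continuous_on UNIV Gk"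
    proof (rule uc_affine_tails[where p = p and ar = B and br = "A + c" and al = "- B" and bl = "A + c"])
      show "continuous_on UNIV Gk" unfolding Gk_def[abs_def] by (intro continuous_on_add Hcont \<Gamma>cont)
      show "p \<ge> 0" using pK K by simp
      show "Gk x = B * x + (A + c)" if "x \<ge> p" for x using Hr[OF that] unfolding Gk_def by simp
      show "Gk x = - B * x + (A + c)" if "x \<le> - p" for x using Hl[OF that] unfolding Gk_def by simp
    qed
    show "p \<ge> K" by (rule pK)
    show "\<exists>a b. \<forall>x\<ge>p. Gk x = a * x + b"
      by (rule exI[of _ B], rule exI[of _ "A + c"]) (auto simp: Gk_def Hr)
    show "\<exists>a b. \<forall>x\<le>- p. Gk x = a * x + b"
      by (rule exI[of _ "- B"], rule exI[of _ "A + c"]) (auto simp: Gk_def Hl)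
    show "\<forall>x\<in>{-K..K}. Gk x = h x + \<Gamma> x" using H_eq unfolding Gk_def by simp
    show "\<forall>x. Gk x \<ge> h x + \<Gamma> x" using H_ge unfolding Gk_def by simp
    show "concave_on UNIV (\<lambda>x. Gk x - \<Gamma> x)" using Hc unfolding Gk_def by simp
    show "\<forall>x. \<bar>Gk x\<bar> \<le> (A + 2 * B\<^sup>2 / \<iota> + B) * (1 + \<bar>x\<bar>)"
    proof
      fix x
      have lo: "Gk x \<ge> - (A + B * \<bar>x\<bar>)" using H_ge[of x] gb[of x] unfolding Gk_def by linarith
      have up: "Gk x \<le> A + c + B * \<bar>x\<bar>"
      proof (cases "0 \<le> x")
        case True
        have "H x \<le> \<psi>p x" unfolding H_def by simp
        then show ?thesis using True unfolding Gk_def \<psi>p_def F_def by simp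
      next
        case False
        have "H x \<le> \<psi>m x" unfolding H_def by simp
        then show ?thesis using False unfolding Gk_def \<psi>m_def Fm_def by simp
      qed
      have "\<bar>Gk x\<bar> \<le> A + c + B * \<bar>x\<bar>" using lo up c0 by linarith
      also have "\<dots> \<le> (A + c + B) * (1 + \<bar>x\<bar>)" using A B c0 by (simp add: algebra_simps)
      finally show "\<bar>Gk x\<bar> \<le> (A + 2 * B\<^sup>2 / \<iota> + B) * (1 + \<bar>x\<bar>)" unfolding c_def .
    qed
  qed
qed


theorem lemma2p1:
  fixes f \<gamma> g \<Gamma> :: "real \<Rightarrow> real" and \<iota> :: real
  assumes f_C2b: "C2b f"
    and f_pos: "Inf (range f) > 0"
    and \<gamma>_bdd: "bounded (range \<gamma>)"
    and \<gamma>_cont: "continuous_on UNIV \<gamma>"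
    and \<iota>_pos: "\<iota> > 0"
    and \<gamma>_bounds: "\<And>x. \<iota> \<le> \<gamma> x \<and> \<gamma> x \<le> 1 / f x - \<iota>"
    and g_lsc: "lsc g"
    and g_neg_bdd: "\<exists>B. \<forall>x. max (- g x) 0 \<le> B"
    and g_pos_lin: "\<exists>C. \<forall>x. max (g x) 0 \<le> C * (1 + \<bar>x\<bar>)"
    and \<Gamma>: "C2_with_second_deriv \<Gamma> \<gamma>"
    and ghat_uc: "uniformly_continuous_on UNIV (\<lambda>x. conc_env (\<lambda>y. g y - \<Gamma> y) x + \<Gamma> x)"
  shows "\<exists>(G :: real \<Rightarrow> real \<Rightarrow> real) (xK :: real \<Rightarrow> real).
     (\<forall>K>0.
        uniformly_continuous_on UNIV (G K) \<and> xK K \<ge> K \<and>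
        (\<exists>a b. \<forall>x\<ge>xK K. G K x = a * x + b) \<and>
        (\<exists>a b. \<forall>x\<le>- xK K. G K x = a * x + b) \<and>
        (\<forall>x\<in>{-K..K}. G K x = conc_env (\<lambda>y. g y - \<Gamma> y) x + \<Gamma> x) \<and>
        (\<forall>x. G K x \<ge> conc_env (\<lambda>y. g y - \<Gamma> y) x + \<Gamma> x) \<and>
        (\<forall>\<Gamma>'. C2_with_second_deriv \<Gamma>' \<gamma> \<longrightarrow> concave_on UNIV (\<lambda>x. G K x - \<Gamma>' x))) \<and>
     (\<exists>C. \<forall>K>0. \<forall>x. \<bar>G K x\<bar> \<le> C * (1 + \<bar>x\<bar>)) \<and>
     (\<forall>S. compact S \<longrightarrow> (\<forall>\<epsilon>>0. \<exists>K0. \<forall>K\<ge>K0. \<forall>x\<in>S.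
        \<bar>G K x - (conc_env (\<lambda>y. g y - \<Gamma> y) x + \<Gamma> x)\<bar> < \<epsilon>))"
proof -
  define h where "h = conc_env (\<lambda>y. g y - \<Gamma> y)"
  obtain \<Gamma>1 where \<Gamma>d: "\<And>x. (\<Gamma> has_real_derivative \<Gamma>1 x) (at x)"
    and \<Gamma>1d: "\<And>x. (\<Gamma>1 has_real_derivative \<gamma> x) (at x)"
    using \<Gamma> unfolding C2_with_second_deriv_def by blast
  have \<gamma>\<iota>: "\<And>x. \<iota> \<le> \<gamma> x" using \<gamma>_bounds by blast
  have hc: "concave_on UNIV h" unfolding h_def by (rule conc_env_concave)
  obtain A B where AB: "A \<ge> 0" "B \<ge> 0" "\<And>x. \<bar>h x + \<Gamma> x\<bar> \<le> A + B * \<bar>x\<bar>"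
    using uc_linear_growth[OF ghat_uc] unfolding h_def by blast
  define C0 where "C0 = A + 2 * B\<^sup>2 / \<iota> + B"
  define Q where "Q K Gk xk \<longleftrightarrow> uniformly_continuous_on UNIV Gk \<and> xk \<ge> K \<and>
     (\<exists>a b. \<forall>x\<ge>xk. Gk x = a * x + b) \<and> (\<exists>a b. \<forall>x\<le>- xk. Gk x = a * x + b) \<and>
     (\<forall>x\<in>{-K..K}. Gk x = h x + \<Gamma> x) \<and> (\<forall>x. Gk x \<ge> h x + \<Gamma> x) \<and>
     concave_on UNIV (\<lambda>x. Gk x - \<Gamma> x) \<and>
     (\<forall>x. \<bar>Gk x\<bar> \<le> C0 * (1 + \<bar>x\<bar>))" for K :: real and Gk :: "real \<Rightarrow> real" and xk :: real
  have ex: "\<forall>K. \<exists>Gk. \<exists>xk. K > 0 \<longrightarrow> Q K Gk xk"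
  proof
    fix K :: real
    show "\<exists>Gk. \<exists>xk. K > 0 \<longrightarrow> Q K Gk xk"
    proof (cases "K > 0")
      case True
      from construction[OF hc \<Gamma>d \<Gamma>1d \<gamma>\<iota> \<iota>_pos AB(3) AB(1) AB(2) True]
      show ?thesis unfolding Q_def C0_def by blast
    qed auto
  qed
  then obtain G0 where "\<forall>K. \<exists>xk. K > 0 \<longrightarrow> Q K (G0 K) xk" by (metis choice)
  then obtain xK0 where GQ: "\<And>K. K > 0 \<Longrightarrow> Q K (G0 K) (xK0 K)" by (metis choice)
  have \<Gamma>diff: "concave_on UNIV (\<lambda>x. \<Gamma> x - \<Gamma>' x)" if G': "C2_with_second_deriv \<Gamma>' \<gamma>" for \<Gamma>'
  proof -
    obtain \<Gamma>1' where d': "\<And>x. (\<Gamma>' has_real_derivative \<Gamma>1' x) (at x)"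
      and d1': "\<And>x. (\<Gamma>1' has_real_derivative \<gamma> x) (at x)"
      using G' unfolding C2_with_second_deriv_def by blast
    show ?thesis
    proof (rule f''_le0_imp_concave[where f' = "\<lambda>x. \<Gamma>1 x - \<Gamma>1' x" and f'' = "\<lambda>x. \<gamma> x - \<gamma> x"])
      show "DERIV (\<lambda>x. \<Gamma> x - \<Gamma>' x) x :> \<Gamma>1 x - \<Gamma>1' x" for x by (intro DERIV_diff \<Gamma>d d')
      show "DERIV (\<lambda>x. \<Gamma>1 x - \<Gamma>1' x) x :> \<gamma> x - \<gamma> x" for x by (intro DERIV_diff \<Gamma>1d d1')
    qed auto
  qed
  have P1: "uniformly_continuous_on UNIV (G0 K) \<and> xK0 K \<ge> K \<and>
        (\<exists>a b. \<forall>x\<ge>xK0 K. G0 K x = a * x + b) \<and>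
        (\<exists>a b. \<forall>x\<le>- xK0 K. G0 K x = a * x + b) \<and>
        (\<forall>x\<in>{-K..K}. G0 K x = conc_env (\<lambda>y. g y - \<Gamma> y) x + \<Gamma> x) \<and>
        (\<forall>x. G0 K x \<ge> conc_env (\<lambda>y. g y - \<Gamma> y) x + \<Gamma> x) \<and>
        (\<forall>\<Gamma>'. C2_with_second_deriv \<Gamma>' \<gamma> \<longrightarrow> concave_on UNIV (\<lambda>x. G0 K x - \<Gamma>' x))"
    if K: "K > 0" for K
  proof -
    note q = GQ[OF K, unfolded Q_def]
    have cc: "concave_on UNIV (\<lambda>x. G0 K x - \<Gamma>' x)" if "C2_with_second_deriv \<Gamma>' \<gamma>" for \<Gamma>'
    proof -
      have c1: "concave_on UNIV (\<lambda>x. G0 K x - \<Gamma> x)" using q by blast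
      from concave_on_add[OF c1 \<Gamma>diff[OF that]] show ?thesis by simp
    qed
    show ?thesis using q cc unfolding h_def by blast
  qed
  have P2: "\<exists>C. \<forall>K>0. \<forall>x. \<bar>G0 K x\<bar> \<le> C * (1 + \<bar>x\<bar>)"
    using GQ unfolding Q_def by blast
  have P3: "\<exists>K0. \<forall>K\<ge>K0. \<forall>x\<in>S. \<bar>G0 K x - (conc_env (\<lambda>y. g y - \<Gamma> y) x + \<Gamma> x)\<bar> < \<epsilon>"
    if S: "compact S" and e: "\<epsilon> > 0" for S :: "real set" and \<epsilon> :: real
  proof -
    obtain R where R: "\<And>x. x \<in> S \<Longrightarrow> \<bar>x\<bar> \<le> R"
      using compact_imp_bounded[OF S] unfolding bounded_real by blast
    show ?thesis
    proof (intro exI[of _ "max R 1"] allI impI ballI)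
      fix K x assume K: "max R 1 \<le> K" and x: "x \<in> S"
      have "K > 0" using K by simp
      note q = GQ[OF this, unfolded Q_def]
      have "x \<in> {-K..K}" using R[OF x] K by auto
      then have "G0 K x = h x + \<Gamma> x" using q by blast
      then show "\<bar>G0 K x - (conc_env (\<lambda>y. g y - \<Gamma> y) x + \<Gamma> x)\<bar> < \<epsilon>" using e unfolding h_def by simp
    qed
  qed
  show ?thesis
    apply (rule exI[of _ G0], rule exI[of _ xK0])
    using P1 P2 P3 by blast
qed

end
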